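(* Let $\Upsilon$ be a finite alphabet with a partition $\{\Upsilon_0,\Upsilon_1\}$, $|\Upsilon_0|=n_0$, $|\Upsilon_1|=n_1$, and let $(\eta,\omega)=((\eta_\ell)_{\ell\ge1},(\omega_\ell)_{\ell\ge1})$ be a pair of nonnegative integer sequences, each with finite support. Then there exists an exhaustive prefix-free list over $\Upsilon$ with length distribution $(\eta,\omega)$ if and only if there exists a pair of nonnegative integer sequences $(y_\ell)_{\ell\ge0},(z_\ell)_{\ell\ge0}$ with finite support, with $y_0=1$ and $z_0=0$, such that for every $\ell\ge1$: $\eta_\ell=n_0y_{\ell-1}+n_1z_{\ell-1}-y_\ell$ and $\omega_\ell=n_1y_{\ell-1}+n_0z_{\ell-1}-z_\ell$.
   Context: A word over $\Upsilon$ is even (resp. odd) if it contains an even (resp. odd) number of symbols from $\Upsilon_1$. A finite list $\mathcal{L}$ of nonempty words over $\Upsilon$ is prefix-free if no word in it is a prefix of another, and exhaustive if every word over $\Upsilon$ either has a prefix in $\mathcal{L}$ or is a prefix of some word in $\mathcal{L}$. Its length distribution is $(\eta,\omega)$ where $\eta_\ell$ (resp. $\omega_\ell$) is the number of even (resp. odd) words of length $\ell$ in $\mathcal{L}$. *)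

theory Defs
  imports Main "HOL-Library.Sublist"
begin

definition word_over :: "'a set \<Rightarrow> 'a list \<Rightarrow> bool" where
  "word_over Y w \<longleftrightarrow> set w \<subseteq> Y"

definition even_word :: "'a set \<Rightarrow> 'a list \<Rightarrow> bool" where
  "even_word Y1 w \<longleftrightarrow> even (length (filter (\<lambda>c. c \<in> Y1) w))"

definition odd_word :: "'a set \<Rightarrow> 'a list \<Rightarrow> bool" where
  "odd_word Y1 w \<longleftrightarrow> odd (length (filter (\<lambda>c. c \<in> Y1) w))"

definition prefix_free_list :: "'a set \<Rightarrow> 'a list list \<Rightarrow> bool" where
  "prefix_free_list Y L \<longleftrightarrow>
     (\<forall>w\<in>set L. w \<noteq> [] \<and> word_over Y w) \<and>
     (\<forall>i<length L. \<forall>j<length L. i \<noteq> j \<longrightarrow> \<not> prefix (L ! i) (L ! j))"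

definition exhaustive_list :: "'a set \<Rightarrow> 'a list list \<Rightarrow> bool" where
  "exhaustive_list Y L \<longleftrightarrow>
     (\<forall>w. word_over Y w \<longrightarrow> (\<exists>u\<in>set L. prefix u w) \<or> (\<exists>u\<in>set L. prefix w u))"

definition has_length_distribution ::
  "'a set \<Rightarrow> 'a list list \<Rightarrow> (nat \<Rightarrow> nat) \<Rightarrow> (nat \<Rightarrow> nat) \<Rightarrow> bool" where
  "has_length_distribution Y1 L eta omega \<longleftrightarrow>
     (\<forall>l\<ge>1. eta l = length (filter (\<lambda>w. length w = l \<and> even_word Y1 w) L) \<and>
             omega l = length (filter (\<lambda>w. length w = l \<and> odd_word Y1 w) L))"

end

theory Submission
  imports Defs
begin


definition chl :: "'a set \<Rightarrow> 'a list set \<Rightarrow> 'a list set" where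
  "chl Y A = {w @ [c] | w c. w \<in> A \<and> c \<in> Y}"

lemma chl_image: "chl Y A = (\<lambda>(w,c). w @ [c]) ` (A \<times> Y)"
  by (auto simp: chl_def)

lemma finite_chl: "finite A \<Longrightarrow> finite Y \<Longrightarrow> finite (chl Y A)"
  by (simp add: chl_image)

lemma odd_not_even: "odd_word Y1 w \<longleftrightarrow> \<not> even_word Y1 w"
  by (simp add: even_word_def odd_word_def)

lemma even_snoc: "even_word Y1 (w @ [c]) \<longleftrightarrow> (even_word Y1 w \<longleftrightarrow> c \<notin> Y1)"
  by (auto simp: even_word_def)

lemma card_chl:
  assumes "finite Y" "Y0 \<union> Y1 = Y" "Y0 \<inter> Y1 = {}" "finite A"
  shows "card {v\<in>chl Y A. even_word Y1 v} = card Y0 * card {w\<in>A. even_word Y1 w} + card Y1 * card {w\<in>A. odd_word Y1 w}"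
    and "card {v\<in>chl Y A. odd_word Y1 v} = card Y1 * card {w\<in>A. even_word Y1 w} + card Y0 * card {w\<in>A. odd_word Y1 w}"
proof -
  let ?f = "\<lambda>(w,c). w @ [c]"
  let ?E = "{w\<in>A. even_word Y1 w}" and ?O = "{w\<in>A. odd_word Y1 w}"
  have inj: "inj_on ?f S" for S by (auto simp: inj_on_def)
  have fin: "finite ?E" "finite ?O" "finite Y0" "finite Y1" using assms by auto
  have e: "{v\<in>chl Y A. even_word Y1 v} = ?f ` (?E \<times> Y0 \<union> ?O \<times> Y1)"
  proof
    show "{v\<in>chl Y A. even_word Y1 v} \<subseteq> ?f ` (?E \<times> Y0 \<union> ?O \<times> Y1)"
    proof
      fix v assume v: "v \<in> {v\<in>chl Y A. even_word Y1 v}"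
      then obtain w c where wc: "v = w @ [c]" "w \<in> A" "c \<in> Y" by (auto simp: chl_def)
      have "(w, c) \<in> ?E \<times> Y0 \<union> ?O \<times> Y1"
      proof (cases "c \<in> Y1")
        case True
        then show ?thesis using v wc by (simp add: even_snoc odd_not_even)
      next
        case False
        then have "c \<in> Y0" using wc(3) assms(2) by blast
        then show ?thesis using False v wc by (simp add: even_snoc odd_not_even)
      qed
      then have "?f (w, c) \<in> ?f ` (?E \<times> Y0 \<union> ?O \<times> Y1)" by (rule imageI)
      then show "v \<in> ?f ` (?E \<times> Y0 \<union> ?O \<times> Y1)" using wc(1) by simp
    qed
  next
    show "?f ` (?E \<times> Y0 \<union> ?O \<times> Y1) \<subseteq> {v\<in>chl Y A. even_word Y1 v}"
    proof
      fix x assume "x \<in> ?f ` (?E \<times> Y0 \<union> ?O \<times> Y1)"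
      then obtain w c where x: "x = w @ [c]" "(w, c) \<in> ?E \<times> Y0 \<union> ?O \<times> Y1" by auto
      then have "w \<in> A" "c \<in> Y" using assms(2) by auto
      then have "x \<in> chl Y A" using x(1) by (auto simp: chl_def)
      moreover have "even_word Y1 x"
      proof (cases "c \<in> Y1")
        case True
        then have "c \<notin> Y0" using assms(3) by blast
        then show ?thesis using True x by (auto simp: even_snoc odd_not_even)
      next
        case False
        then show ?thesis using x by (auto simp: even_snoc odd_not_even)
      qed
      ultimately show "x \<in> {v\<in>chl Y A. even_word Y1 v}" by simp
    qed
  qed
  have o: "{v\<in>chl Y A. odd_word Y1 v} = ?f ` (?E \<times> Y1 \<union> ?O \<times> Y0)"
  proof
    show "{v\<in>chl Y A. odd_word Y1 v} \<subseteq> ?f ` (?E \<times> Y1 \<union> ?O \<times> Y0)"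
    proof
      fix v assume v: "v \<in> {v\<in>chl Y A. odd_word Y1 v}"
      then obtain w c where wc: "v = w @ [c]" "w \<in> A" "c \<in> Y" by (auto simp: chl_def)
      have "(w, c) \<in> ?E \<times> Y1 \<union> ?O \<times> Y0"
      proof (cases "c \<in> Y1")
        case True
        then show ?thesis using v wc by (simp add: even_snoc odd_not_even)
      next
        case False
        then have "c \<in> Y0" using wc(3) assms(2) by blast
        then show ?thesis using False v wc by (simp add: even_snoc odd_not_even)
      qed
      then have "?f (w, c) \<in> ?f ` (?E \<times> Y1 \<union> ?O \<times> Y0)" by (rule imageI)
      then show "v \<in> ?f ` (?E \<times> Y1 \<union> ?O \<times> Y0)" using wc(1) by simp
    qed
  next
    show "?f ` (?E \<times> Y1 \<union> ?O \<times> Y0) \<subseteq> {v\<in>chl Y A. odd_word Y1 v}"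
    proof
      fix x assume "x \<in> ?f ` (?E \<times> Y1 \<union> ?O \<times> Y0)"
      then obtain w c where x: "x = w @ [c]" "(w, c) \<in> ?E \<times> Y1 \<union> ?O \<times> Y0" by auto
      then have "w \<in> A" "c \<in> Y" using assms(2) by auto
      then have "x \<in> chl Y A" using x(1) by (auto simp: chl_def)
      moreover have "odd_word Y1 x"
      proof (cases "c \<in> Y1")
        case True
        then have "c \<notin> Y0" using assms(3) by blast
        then show ?thesis using True x by (auto simp: even_snoc odd_not_even)
      next
        case False
        then show ?thesis using x by (auto simp: even_snoc odd_not_even)
      qed
      ultimately show "x \<in> {v\<in>chl Y A. odd_word Y1 v}" by simp
    qed
  qed
  have d: "(?E \<times> Y0) \<inter> (?O \<times> Y1) = {}" "(?E \<times> Y1) \<inter> (?O \<times> Y0) = {}"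
    by (auto simp: odd_not_even)
  show "card {v\<in>chl Y A. even_word Y1 v} = card Y0 * card ?E + card Y1 * card ?O"
    unfolding e card_image[OF inj] using d fin
    by (subst card_Un_disjoint) (auto simp: card_cartesian_product)
  show "card {v\<in>chl Y A. odd_word Y1 v} = card Y1 * card ?E + card Y0 * card ?O"
    unfolding o card_image[OF inj] using d fin
    by (subst card_Un_disjoint) (auto simp: card_cartesian_product)
qed

lemma chl_mem: "v \<in> chl Y A \<longleftrightarrow> v \<noteq> [] \<and> butlast v \<in> A \<and> last v \<in> Y"
proof
  assume "v \<in> chl Y A"
  then show "v \<noteq> [] \<and> butlast v \<in> A \<and> last v \<in> Y" unfolding chl_def by auto
next
  assume a: "v \<noteq> [] \<and> butlast v \<in> A \<and> last v \<in> Y"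
  then have "v = butlast v @ [last v]" by simp
  then show "v \<in> chl Y A" unfolding chl_def using a by blast
qed



locale cons_ctx =
  fixes Y Y0 Y1 :: "'a set" and y z :: "nat \<Rightarrow> nat" and N :: nat
  assumes fin: "finite Y" and un: "Y0 \<union> Y1 = Y" and dis: "Y0 \<inter> Y1 = {}" and ne: "Y \<noteq> {}"
   and y0: "y 0 = 1" and z0: "z 0 = 0"
   and yle: "\<And>l. y (Suc l) \<le> card Y0 * y l + card Y1 * z l"
   and zle: "\<And>l. z (Suc l) \<le> card Y1 * y l + card Y0 * z l"
   and ybd: "\<And>l. l > N \<Longrightarrow> y l = 0" and zbd: "\<And>l. l > N \<Longrightarrow> z l = 0"
begin

primrec act :: "nat \<Rightarrow> 'a list set" where
  "act 0 = {[]}"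
| "act (Suc l) = (SOME A. A \<subseteq> chl Y (act l) \<and> card {w\<in>A. even_word Y1 w} = y (Suc l)
                     \<and> card {w\<in>A. odd_word Y1 w} = z (Suc l))"

lemma act_inv: "finite (act l) \<and> (\<forall>w\<in>act l. length w = l \<and> set w \<subseteq> Y) \<and>
   card {w\<in>act l. even_word Y1 w} = y l \<and> card {w\<in>act l. odd_word Y1 w} = z l
   \<and> (l > 0 \<longrightarrow> act l \<subseteq> chl Y (act (l - 1)))"
proof (induction l)
  case 0
  have "{w\<in>{[]::'a list}. even_word Y1 w} = {[]}" "{w\<in>{[]::'a list}. odd_word Y1 w} = {}"
    by (auto simp: even_word_def odd_word_def)
  then show ?case by (simp add: y0 z0)
next
  case (Suc l)
  let ?C = "chl Y (act l)"
  have fC: "finite ?C" using Suc fin finite_chl by blast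
  have cE: "card {v\<in>?C. even_word Y1 v} = card Y0 * y l + card Y1 * z l"
   and cO: "card {v\<in>?C. odd_word Y1 v} = card Y1 * y l + card Y0 * z l"
    using card_chl[OF fin un dis, of "act l"] Suc by auto
  obtain E where E: "E \<subseteq> {v\<in>?C. even_word Y1 v}" "card E = y (Suc l)"
    using obtain_subset_with_card_n[of "y (Suc l)" "{v\<in>?C. even_word Y1 v}"] cE yle by metis
  obtain Od where Od: "Od \<subseteq> {v\<in>?C. odd_word Y1 v}" "card Od = z (Suc l)"
    using obtain_subset_with_card_n[of "z (Suc l)" "{v\<in>?C. odd_word Y1 v}"] cO zle by metis
  have "{w\<in>E \<union> Od. even_word Y1 w} = E" "{w\<in>E \<union> Od. odd_word Y1 w} = Od"
    using E Od by (auto simp: odd_not_even)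
  then have ex: "\<exists>A. A \<subseteq> ?C \<and> card {w\<in>A. even_word Y1 w} = y (Suc l)
                     \<and> card {w\<in>A. odd_word Y1 w} = z (Suc l)"
    using E Od by (intro exI[of _ "E \<union> Od"]) auto
  have P: "act (Suc l) \<subseteq> ?C \<and> card {w\<in>act (Suc l). even_word Y1 w} = y (Suc l)
                     \<and> card {w\<in>act (Suc l). odd_word Y1 w} = z (Suc l)"
    unfolding act.simps by (rule someI_ex[OF ex])
  have "\<forall>w\<in>?C. length w = Suc l \<and> set w \<subseteq> Y"
  proof
    fix v assume "v \<in> ?C"
    then obtain wa c where "v = wa @ [c]" "wa \<in> act l" "c \<in> Y" by (auto simp: chl_def)
    then show "length v = Suc l \<and> set v \<subseteq> Y" using Suc by auto
  qed
  then show ?case using P fC finite_subset by auto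
qed

declare act.simps(2)[simp del]

lemma act_len: "w \<in> act l \<Longrightarrow> length w = l"
  using act_inv by blast

lemma act_word: "w \<in> act l \<Longrightarrow> set w \<subseteq> Y"
  using act_inv by blast

lemma act_sub: "act (Suc l) \<subseteq> chl Y (act l)"
  using act_inv[of "Suc l"] by simp

lemma act_fin: "finite (act l)"
  using act_inv by blast

lemma chl_len: "v \<in> chl Y (act k) \<Longrightarrow> length v = Suc k"
  by (auto simp: chl_def act_len)

lemma act_prefix: "u \<in> act l \<Longrightarrow> prefix v u \<Longrightarrow> v \<in> act (length v)"
proof (induction l arbitrary: u)
  case 0
  then show ?case by simp
next
  case (Suc l)
  then have "u \<in> chl Y (act l)" using act_sub by blast
  then obtain w c where u: "u = w @ [c]" "w \<in> act l" by (auto simp: chl_def)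
  show ?case
  proof (cases "v = u")
    case True
    then show ?thesis using Suc act_len by metis
  next
    case False
    then have "prefix v w" using Suc.prems(2) u by simp
    then show ?thesis using Suc.IH u by blast
  qed
qed

lemma act_empty: "l > N \<Longrightarrow> act l = {}"
proof -
  assume "l > N"
  then have "card {w\<in>act l. even_word Y1 w} = 0" "card {w\<in>act l. odd_word Y1 w} = 0"
    using act_inv[of l] ybd zbd by auto
  then have "{w\<in>act l. even_word Y1 w} = {}" "{w\<in>act l. odd_word Y1 w} = {}"
    using act_fin[of l] by auto
  then show "act l = {}" by (auto simp: odd_not_even)
qed

definition LV :: "'a list set" where
  "LV = {w. w \<noteq> [] \<and> w \<in> chl Y (act (length w - 1)) \<and> w \<notin> act (length w)}"

lemma LV_pf: "u \<in> LV \<Longrightarrow> v \<in> LV \<Longrightarrow> prefix u v \<Longrightarrow> u = v"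
proof (rule ccontr)
  assume a: "u \<in> LV" "v \<in> LV" "prefix u v" "u \<noteq> v"
  then obtain w c where v: "v = w @ [c]" "w \<in> act (length v - 1)" by (auto simp: LV_def chl_def)
  then have "prefix u w" using a by simp
  then have "u \<in> act (length u)" using act_prefix v by blast
  then show False using a by (auto simp: LV_def)
qed

lemma LV_exh: "set w \<subseteq> Y \<Longrightarrow> (\<exists>u\<in>LV. prefix u w) \<or> w \<in> act (length w)"
proof (induction w rule: rev_induct)
  case Nil
  then show ?case by simp
next
  case (snoc x xs)
  then consider "\<exists>u\<in>LV. prefix u xs" | "xs \<in> act (length xs)" by auto
  then show ?case
  proof cases
    case 1
    then show ?thesis by auto
  next
    case 2
    then have c: "xs @ [x] \<in> chl Y (act (length xs))" using snoc by (auto simp: chl_def)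
    show ?thesis
    proof (cases "xs @ [x] \<in> act (length (xs @ [x]))")
      case False
      then have "xs @ [x] \<in> LV" using c by (auto simp: LV_def)
      then show ?thesis by blast
    qed simp
  qed
qed

lemma LV_down: "w \<in> act l \<Longrightarrow> \<exists>u\<in>LV. prefix w u"
proof (induction "Suc N - l" arbitrary: l w rule: less_induct)
  case less
  obtain c where c: "c \<in> Y" using ne by auto
  have wl: "length w = l" using less act_len by blast
  have C: "w @ [c] \<in> chl Y (act l)" using less c by (auto simp: chl_def)
  show ?case
  proof (cases "w @ [c] \<in> act (Suc l)")
    case True
    then have "Suc l \<le> N" using act_empty by (metis empty_iff not_le)
    then have "Suc N - Suc l < Suc N - l" by simp
    from less(1)[OF this True] obtain u where "u \<in> LV" "prefix (w @ [c]) u" by auto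
    then show ?thesis by (metis prefix_order.trans prefixI)
  next
    case False
    then have "w @ [c] \<in> LV" using C wl by (auto simp: LV_def)
    then show ?thesis by (metis prefixI)
  qed
qed

lemma LV_fin: "finite LV"
proof -
  have "LV \<subseteq> (\<Union>k\<le>N. chl Y (act k))"
  proof
    fix w assume w: "w \<in> LV"
    then have "w \<in> chl Y (act (length w - 1))" by (simp add: LV_def)
    then have "act (length w - 1) \<noteq> {}" by (auto simp: chl_def)
    then have "length w - 1 \<le> N" using act_empty not_le by blast
    then show "w \<in> (\<Union>k\<le>N. chl Y (act k))" using \<open>w \<in> chl Y _\<close> by blast
  qed
  moreover have "finite (\<Union>k\<le>N. chl Y (act k))" using finite_chl act_fin fin by blast
  ultimately show ?thesis using finite_subset by blast
qed

lemma LV_nonempty_words: "w \<in> LV \<Longrightarrow> w \<noteq> [] \<and> set w \<subseteq> Y"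
proof -
  assume "w \<in> LV"
  then obtain wa c where "w = wa @ [c]" "wa \<in> act (length w - 1)" "c \<in> Y" by (auto simp: LV_def chl_def)
  then show ?thesis using act_word by auto
qed

lemma LV_even: "{w\<in>LV. length w = Suc k \<and> even_word Y1 w} =
   {v\<in>chl Y (act k). even_word Y1 v} - {v\<in>act (Suc k). even_word Y1 v}"
  apply (auto simp: LV_def dest: chl_len act_len)
  by (frule chl_len) simp

lemma LV_odd: "{w\<in>LV. length w = Suc k \<and> odd_word Y1 w} =
   {v\<in>chl Y (act k). odd_word Y1 v} - {v\<in>act (Suc k). odd_word Y1 v}"
  apply (auto simp: LV_def dest: chl_len act_len)
  by (frule chl_len) simp

lemma LV_card_even: "card {w\<in>LV. length w = Suc k \<and> even_word Y1 w} =
   card Y0 * y k + card Y1 * z k - y (Suc k)"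
proof -
  have s: "{v\<in>act (Suc k). even_word Y1 v} \<subseteq> {v\<in>chl Y (act k). even_word Y1 v}"
    using act_sub by blast
  have f: "finite {v\<in>act (Suc k). even_word Y1 v}" using act_fin by simp
  show ?thesis unfolding LV_even card_Diff_subset[OF f s]
    using card_chl(1)[OF fin un dis act_fin[of k]] act_inv[of k] act_inv[of "Suc k"] by simp
qed

lemma LV_card_odd: "card {w\<in>LV. length w = Suc k \<and> odd_word Y1 w} =
   card Y1 * y k + card Y0 * z k - z (Suc k)"
proof -
  have s: "{v\<in>act (Suc k). odd_word Y1 v} \<subseteq> {v\<in>chl Y (act k). odd_word Y1 v}"
    using act_sub by blast
  have f: "finite {v\<in>act (Suc k). odd_word Y1 v}" using act_fin by simp
  show ?thesis unfolding LV_odd card_Diff_subset[OF f s]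
    using card_chl(2)[OF fin un dis act_fin[of k]] act_inv[of k] act_inv[of "Suc k"] by simp
qed

end



lemma length_filter_distinct: "distinct xs \<Longrightarrow> length (filter P xs) = card {x\<in>set xs. P x}"
  by (metis distinct_card distinct_filter set_filter)

lemma forward:
  assumes fin: "finite Y" and un: "Y0 \<union> Y1 = Y" and dis: "Y0 \<inter> Y1 = {}"
    and pf: "prefix_free_list Y L" and ex: "exhaustive_list Y L"
    and hd: "has_length_distribution Y1 L eta omega"
  shows "\<exists>y z :: nat \<Rightarrow> nat.
              finite {l. y l \<noteq> 0} \<and> finite {l. z l \<noteq> 0} \<and> y 0 = 1 \<and> z 0 = 0 \<and>
              (\<forall>l\<ge>1. int (eta l) = int (card Y0) * int (y (l - 1)) + int (card Y1) * int (z (l - 1)) - int (y l) \<and>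
                      int (omega l) = int (card Y1) * int (y (l - 1)) + int (card Y0) * int (z (l - 1)) - int (z l))"
proof -
  define A where "A l = {w. length w = l \<and> set w \<subseteq> Y \<and> (\<forall>u\<in>set L. \<not> prefix u w)}" for l
  define y where "y l = card {w\<in>A l. even_word Y1 w}" for l
  define z where "z l = card {w\<in>A l. odd_word Y1 w}" for l
  have finA: "finite (A l)" for l
    by (rule finite_subset[OF _ finite_lists_length_eq[OF fin, of l]]) (auto simp: A_def)
  have Lne: "\<forall>u\<in>set L. u \<noteq> [] \<and> set u \<subseteq> Y" using pf by (auto simp: prefix_free_list_def word_over_def)
  have pf2: "\<And>i j. i < length L \<Longrightarrow> j < length L \<Longrightarrow> i \<noteq> j \<Longrightarrow> \<not> prefix (L ! i) (L ! j)"
    using pf by (auto simp: prefix_free_list_def)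
  have dL: "distinct L"
    unfolding distinct_conv_nth
  proof (intro allI impI)
    fix i j assume ij: "i < length L" "j < length L" "i \<noteq> j"
    show "L ! i \<noteq> L ! j"
    proof
      assume "L ! i = L ! j"
      then have "prefix (L ! i) (L ! j)" by simp
      then show False using pf2[OF ij] by blast
    qed
  qed
  have noprop: "\<not> prefix u v" if uv: "u \<in> set L" "v \<in> set L" "u \<noteq> v" for u v
  proof -
    obtain i where i: "i < length L" "L ! i = u" using uv(1) by (auto simp: in_set_conv_nth)
    obtain j where j: "j < length L" "L ! j = v" using uv(2) by (auto simp: in_set_conv_nth)
    have "i \<noteq> j" using i j uv(3) by auto
    then show ?thesis using pf2[OF i(1) j(1)] i j by simp
  qed
  have A0: "A 0 = {[]}" using Lne by (auto simp: A_def)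
  have "{w\<in>{[]::'a list}. even_word Y1 w} = {[]}" "{w\<in>{[]::'a list}. odd_word Y1 w} = {}"
    by (auto simp: even_word_def odd_word_def)
  then have y0: "y 0 = 1" and z0: "z 0 = 0" by (auto simp: y_def z_def A0)
  define M where "M = Max (length ` set L)"
  have bnd: "l \<le> M" if ne: "A l \<noteq> {}" for l
  proof -
    obtain w where w: "w \<in> A l" using ne by blast
    then have "word_over Y w" by (auto simp: A_def word_over_def)
    then have "(\<exists>u\<in>set L. prefix u w) \<or> (\<exists>u\<in>set L. prefix w u)"
      using ex unfolding exhaustive_list_def by blast
    moreover have "\<not> (\<exists>u\<in>set L. prefix u w)" using w by (simp add: A_def)
    ultimately obtain u where u: "u \<in> set L" "prefix w u" by blast
    then have "length w \<le> length u" by (simp add: prefix_length_le)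
    also have "\<dots> \<le> M" unfolding M_def using u by simp
    finally show ?thesis using w by (simp add: A_def)
  qed
  have fy: "finite {l. y l \<noteq> 0}"
  proof (rule finite_subset[of _ "{..M}"])
    show "{l. y l \<noteq> 0} \<subseteq> {..M}"
    proof
      fix l assume "l \<in> {l. y l \<noteq> 0}"
      then have "A l \<noteq> {}" by (auto simp: y_def)
      then show "l \<in> {..M}" using bnd by simp
    qed
  qed simp
  have fz: "finite {l. z l \<noteq> 0}"
  proof (rule finite_subset[of _ "{..M}"])
    show "{l. z l \<noteq> 0} \<subseteq> {..M}"
    proof
      fix l assume "l \<in> {l. z l \<noteq> 0}"
      then have "A l \<noteq> {}" by (auto simp: z_def)
      then show "l \<in> {..M}" using bnd by simp
    qed
  qed simp
  have key: "chl Y (A k) = A (Suc k) \<union> {w\<in>set L. length w = Suc k}" for k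
  proof
    show "chl Y (A k) \<subseteq> A (Suc k) \<union> {w\<in>set L. length w = Suc k}"
    proof
      fix v assume "v \<in> chl Y (A k)"
      then obtain w c where v: "v = w @ [c]" "w \<in> A k" "c \<in> Y" by (auto simp: chl_def)
      show "v \<in> A (Suc k) \<union> {w\<in>set L. length w = Suc k}"
      proof (cases "v \<in> set L")
        case True
        then show ?thesis using v by (auto simp: A_def)
      next
        case False
        then have "\<forall>u\<in>set L. \<not> prefix u v" using v by (auto simp: A_def)
        then show ?thesis using v by (auto simp: A_def)
      qed
    qed
  next
    show "A (Suc k) \<union> {w\<in>set L. length w = Suc k} \<subseteq> chl Y (A k)"
    proof
      fix v assume v: "v \<in> A (Suc k) \<union> {w\<in>set L. length w = Suc k}"
      then have vY: "set v \<subseteq> Y" and vl: "length v = Suc k" using Lne by (auto simp: A_def)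
      then have vne: "v \<noteq> []" by auto
      have vv: "v = butlast v @ [last v]" using vne by simp
      have "last v \<in> Y" using vY vne by auto
      moreover have "butlast v \<in> A k"
      proof -
        have "\<not> prefix u (butlast v)" if u: "u \<in> set L" for u
        proof
          assume p: "prefix u (butlast v)"
          then have p2: "prefix u v" using vv by (metis prefix_prefix)
          have "length u \<le> k" using p prefix_length_le vl by fastforce
          then have "u \<noteq> v" using vl by auto
          show False
          proof (cases "v \<in> set L")
            case True
            then show False using noprop u p2 \<open>u \<noteq> v\<close> by blast
          next
            case False
            then show False using v u p2 by (auto simp: A_def)
          qed
        qed
        then show ?thesis using vY vl by (auto simp: A_def dest: in_set_butlastD)
      qed
      ultimately show "v \<in> chl Y (A k)" using vne by (simp add: chl_mem)
    qed
  qed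
  have disj: "A (Suc k) \<inter> {w\<in>set L. length w = Suc k} = {}" for k
    by (auto simp: A_def)
  have cnt: "card {v\<in>chl Y (A k). P v} = card {v\<in>A (Suc k). P v} + card {w\<in>set L. length w = Suc k \<and> P w}" for k P
  proof -
    have "{v\<in>chl Y (A k). P v} = {v\<in>A (Suc k). P v} \<union> {w\<in>set L. length w = Suc k \<and> P w}"
      unfolding key by auto
    moreover have "{v\<in>A (Suc k). P v} \<inter> {w\<in>set L. length w = Suc k \<and> P w} = {}" using disj[of k] by auto
    ultimately show ?thesis using finA[of "Suc k"] by (simp add: card_Un_disjoint)
  qed
  have eta: "eta (Suc k) = card {w\<in>set L. length w = Suc k \<and> even_word Y1 w}"
   and omega: "omega (Suc k) = card {w\<in>set L. length w = Suc k \<and> odd_word Y1 w}" for k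
    using hd length_filter_distinct[OF dL] by (auto simp: has_length_distribution_def)
  have eqs: "card Y0 * y k + card Y1 * z k = y (Suc k) + eta (Suc k)"
            "card Y1 * y k + card Y0 * z k = z (Suc k) + omega (Suc k)" for k
    using cnt[of k "even_word Y1"] cnt[of k "odd_word Y1"] card_chl[OF fin un dis finA[of k]] eta omega
    by (auto simp: y_def z_def)
  have "\<forall>l\<ge>1. int (eta l) = int (card Y0) * int (y (l - 1)) + int (card Y1) * int (z (l - 1)) - int (y l) \<and>
                      int (omega l) = int (card Y1) * int (y (l - 1)) + int (card Y0) * int (z (l - 1)) - int (z l)"
  proof (intro allI impI)
    fix l :: nat assume "l \<ge> 1"
    then obtain k where l: "l = Suc k" by (cases l) auto
    have "int (card Y0 * y k + card Y1 * z k) = int (y (Suc k) + eta (Suc k))"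
         "int (card Y1 * y k + card Y0 * z k) = int (z (Suc k) + omega (Suc k))"
      using eqs by simp_all
    then show "int (eta l) = int (card Y0) * int (y (l - 1)) + int (card Y1) * int (z (l - 1)) - int (y l) \<and>
                      int (omega l) = int (card Y1) * int (y (l - 1)) + int (card Y0) * int (z (l - 1)) - int (z l)"
      unfolding l by simp
  qed
  then show ?thesis using fy fz y0 z0 by blast
qed



theorem lemma2:
  fixes Y Y0 Y1 :: "'a set" and eta omega :: "nat \<Rightarrow> nat"
  assumes "finite Y"
    and "Y0 \<union> Y1 = Y" and "Y0 \<inter> Y1 = {}" and "Y0 \<noteq> {}" and "Y1 \<noteq> {}"
    and "finite {l. l \<ge> 1 \<and> eta l \<noteq> 0}" and "finite {l. l \<ge> 1 \<and> omega l \<noteq> 0}"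
  shows "(\<exists>L. prefix_free_list Y L \<and> exhaustive_list Y L \<and>
              has_length_distribution Y1 L eta omega)
     \<longleftrightarrow> (\<exists>y z :: nat \<Rightarrow> nat.
              finite {l. y l \<noteq> 0} \<and> finite {l. z l \<noteq> 0} \<and> y 0 = 1 \<and> z 0 = 0 \<and>
              (\<forall>l\<ge>1. int (eta l) = int (card Y0) * int (y (l - 1)) + int (card Y1) * int (z (l - 1)) - int (y l) \<and>
                      int (omega l) = int (card Y1) * int (y (l - 1)) + int (card Y0) * int (z (l - 1)) - int (z l)))"
proof
  assume "\<exists>L. prefix_free_list Y L \<and> exhaustive_list Y L \<and> has_length_distribution Y1 L eta omega"
  then show "\<exists>y z :: nat \<Rightarrow> nat.
              finite {l. y l \<noteq> 0} \<and> finite {l. z l \<noteq> 0} \<and> y 0 = 1 \<and> z 0 = 0 \<and>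
              (\<forall>l\<ge>1. int (eta l) = int (card Y0) * int (y (l - 1)) + int (card Y1) * int (z (l - 1)) - int (y l) \<and>
                      int (omega l) = int (card Y1) * int (y (l - 1)) + int (card Y0) * int (z (l - 1)) - int (z l))"
    using forward[OF assms(1,2,3)] by blast
next
  assume "\<exists>y z :: nat \<Rightarrow> nat.
              finite {l. y l \<noteq> 0} \<and> finite {l. z l \<noteq> 0} \<and> y 0 = 1 \<and> z 0 = 0 \<and>
              (\<forall>l\<ge>1. int (eta l) = int (card Y0) * int (y (l - 1)) + int (card Y1) * int (z (l - 1)) - int (y l) \<and>
                      int (omega l) = int (card Y1) * int (y (l - 1)) + int (card Y0) * int (z (l - 1)) - int (z l))"
  then obtain y z :: "nat \<Rightarrow> nat" where fy: "finite {l. y l \<noteq> 0}" and fz: "finite {l. z l \<noteq> 0}"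
    and y0: "y 0 = 1" and z0: "z 0 = 0"
    and eq: "\<forall>l\<ge>1. int (eta l) = int (card Y0) * int (y (l - 1)) + int (card Y1) * int (z (l - 1)) - int (y l) \<and>
                      int (omega l) = int (card Y1) * int (y (l - 1)) + int (card Y0) * int (z (l - 1)) - int (z l)"
    by blast
  have eqS: "int (eta (Suc l)) = int (card Y0) * int (y l) + int (card Y1) * int (z l) - int (y (Suc l))"
            "int (omega (Suc l)) = int (card Y1) * int (y l) + int (card Y0) * int (z l) - int (z (Suc l))" for l
    using eq[rule_format, of "Suc l"] by auto
  have yle: "y (Suc l) \<le> card Y0 * y l + card Y1 * z l" for l
  proof -
    have "int (y (Suc l)) \<le> int (card Y0 * y l + card Y1 * z l)" using eqS(1)[of l] by simp
    then show ?thesis by linarith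
  qed
  have zle: "z (Suc l) \<le> card Y1 * y l + card Y0 * z l" for l
  proof -
    have "int (z (Suc l)) \<le> int (card Y1 * y l + card Y0 * z l)" using eqS(2)[of l] by simp
    then show ?thesis by linarith
  qed
  obtain N where N: "\<forall>l\<in>{l. y l \<noteq> 0} \<union> {l. z l \<noteq> 0}. l \<le> N"
    using fy fz finite_nat_set_iff_bounded_le by (metis finite_UnI)
  have N1: "\<forall>l. y l \<noteq> 0 \<longrightarrow> l \<le> N" and N2: "\<forall>l. z l \<noteq> 0 \<longrightarrow> l \<le> N" using N by auto
  have ybd: "l > N \<Longrightarrow> y l = 0" for l using N1 not_le by blast
  have zbd: "l > N \<Longrightarrow> z l = 0" for l using N2 not_le by blast
  interpret C: cons_ctx Y Y0 Y1 y z N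
    using assms(1,2,3,4) y0 z0 yle zle ybd zbd by unfold_locales auto
  obtain xs where xs: "set xs = C.LV" "distinct xs" using finite_distinct_list[OF C.LV_fin] by blast
  have "prefix_free_list Y xs"
    unfolding prefix_free_list_def
  proof (rule conjI)
    show "\<forall>w\<in>set xs. w \<noteq> [] \<and> word_over Y w" using C.LV_nonempty_words xs by (auto simp: word_over_def)
  next
    show "\<forall>i<length xs. \<forall>j<length xs. i \<noteq> j \<longrightarrow> \<not> prefix (xs ! i) (xs ! j)"
    proof (intro allI impI)
    fix i j assume ij: "i < length xs" "j < length xs" "i \<noteq> j"
    then have "xs ! i \<noteq> xs ! j" using xs(2) by (simp add: nth_eq_iff_index_eq)
    moreover have "xs ! i \<in> C.LV" "xs ! j \<in> C.LV" using ij xs(1) nth_mem by blast+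
    ultimately show "\<not> prefix (xs ! i) (xs ! j)" using C.LV_pf by blast
    qed
  qed
  moreover have "exhaustive_list Y xs"
    unfolding exhaustive_list_def
  proof (intro allI impI)
    fix w assume "word_over Y w"
    then have "set w \<subseteq> Y" by (simp add: word_over_def)
    then have "(\<exists>u\<in>C.LV. prefix u w) \<or> w \<in> C.act (length w)" by (rule C.LV_exh)
    then show "(\<exists>u\<in>set xs. prefix u w) \<or> (\<exists>u\<in>set xs. prefix w u)"
      using C.LV_down xs(1) by blast
  qed
  moreover have "has_length_distribution Y1 xs eta omega"
    unfolding has_length_distribution_def
  proof (intro allI impI)
    fix l :: nat assume "l \<ge> 1"
    then obtain k where l: "l = Suc k" by (cases l) auto
    have e: "eta (Suc k) = card Y0 * y k + card Y1 * z k - y (Suc k)"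
    proof -
      have "int (card Y0 * y k + card Y1 * z k) = int (card Y0) * int (y k) + int (card Y1) * int (z k)" by simp
      then show ?thesis using eqS(1)[of k] yle[of k] by linarith
    qed
    have o: "omega (Suc k) = card Y1 * y k + card Y0 * z k - z (Suc k)"
    proof -
      have "int (card Y1 * y k + card Y0 * z k) = int (card Y1) * int (y k) + int (card Y0) * int (z k)" by simp
      then show ?thesis using eqS(2)[of k] zle[of k] by linarith
    qed
    show "eta l = length (filter (\<lambda>w. length w = l \<and> even_word Y1 w) xs) \<and>
          omega l = length (filter (\<lambda>w. length w = l \<and> odd_word Y1 w) xs)"
      unfolding l length_filter_distinct[OF xs(2)] xs(1) C.LV_card_even C.LV_card_odd e o by simp
  qed
  ultimately show "\<exists>L. prefix_free_list Y L \<and> exhaustive_list Y L \<and> has_length_distribution Y1 L eta omega"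
    by blast
qed

end
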